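(* Let $1\le p<\infty$ and let $Q$ be a finite set of points in the closed upper half-plane $\{y\ge0\}$ with pairwise distinct $x$-coordinates. For $t\in\mathbb{R}$ and $q\in Q$ write $d(t,q)=\|(t,0)-q\|_p$, and say that $q$ is the farthest point of $Q$ from $t$ if $d(t,q)>d(t,q')$ for all $q'\in Q\setminus\{q\}$. Then: (1) for each $q\in Q$, the set $\{t\in\mathbb{R}: q \text{ is the farthest point of } Q \text{ from } t\}$ is either empty or an interval (connected); and (2) if $t<t'$, $q$ is the farthest point of $Q$ from $t$, $q'$ is the farthest point of $Q$ from $t'$, and $q\neq q'$, then the $x$-coordinate of $q$ is strictly greater than the $x$-coordinate of $q'$. Consequently, the intervals into which the farthest-point Voronoi diagram of $Q$ partitions the $x$-axis, listed from left to right as $I_1,\dots,I_\sigma$, have associated farthest points whose $x$-coordinates are strictly decreasing.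
   Context: $\|\cdot\|_p$ denotes the $L_p$ norm on $\mathbb{R}^2$. *)

theory Defs
  imports "HOL-Analysis.Analysis"
begin

definition lp_dist :: "real \<Rightarrow> real \<times> real \<Rightarrow> real \<times> real \<Rightarrow> real" where
  "lp_dist p u v = (\<bar>fst u - fst v\<bar> powr p + \<bar>snd u - snd v\<bar> powr p) powr (1 / p)"

definition farthest :: "real \<Rightarrow> (real \<times> real) set \<Rightarrow> real \<Rightarrow> real \<times> real \<Rightarrow> bool" where
  "farthest p Q t q \<longleftrightarrow> q \<in> Q \<and>
     (\<forall>q' \<in> Q - {q}. lp_dist p (t, 0) q > lp_dist p (t, 0) q')"

end

theory Submission
  imports Defs
begin

lemma upow_le:
  fixes u p :: real
  assumes "0 \<le> u" "u \<le> 1" "1 \<le> p"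
  shows "u powr p \<le> u"
proof (cases "u = 0")
  case True then show ?thesis by simp
next
  case False
  then have "u powr p \<le> u powr 1"
    using assms by (intro powr_mono') auto
  then show ?thesis using False assms by simp
qed

lemma habs_convex:
  fixes p u x y :: real
  assumes p: "1 \<le> p" and u: "0 \<le> u" "u \<le> 1"
  shows "\<bar>(1-u)*x + u*y\<bar> powr p \<le> (1-u) * \<bar>x\<bar> powr p + u * \<bar>y\<bar> powr p"
proof -
  have tri: "\<bar>(1-u)*x + u*y\<bar> \<le> (1-u)*\<bar>x\<bar> + u*\<bar>y\<bar>"
  proof -
    have "\<bar>(1-u)*x + u*y\<bar> \<le> \<bar>(1-u)*x\<bar> + \<bar>u*y\<bar>" by (rule abs_triangle_ineq)
    also have "\<dots> = (1-u)*\<bar>x\<bar> + u*\<bar>y\<bar>" using u by (simp add: abs_mult)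
    finally show ?thesis .
  qed
  have s1: "\<bar>(1-u)*x + u*y\<bar> powr p \<le> ((1-u)*\<bar>x\<bar> + u*\<bar>y\<bar>) powr p"
    using tri p by (intro powr_mono2) auto
  have s2: "((1-u)*\<bar>x\<bar> + u*\<bar>y\<bar>) powr p \<le> (1-u) * \<bar>x\<bar> powr p + u * \<bar>y\<bar> powr p"
  proof (cases "x = 0")
    case True
    have "(u*\<bar>y\<bar>) powr p = u powr p * \<bar>y\<bar> powr p"
      using u by (simp add: powr_mult)
    also have "\<dots> \<le> u * \<bar>y\<bar> powr p"
      using upow_le[OF u p] by (intro mult_right_mono) auto
    finally show ?thesis using True p by simp
  next
    case xne: False
    show ?thesis
    proof (cases "y = 0")
      case True
      have "((1-u)*\<bar>x\<bar>) powr p = (1-u) powr p * \<bar>x\<bar> powr p"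
        using u by (simp add: powr_mult)
      also have "\<dots> \<le> (1-u) * \<bar>x\<bar> powr p"
        using upow_le[of "1-u" p] u p by (intro mult_right_mono) auto
      finally show ?thesis using True p by simp
    next
      case False
      have "convex_on {0<..} (\<lambda>x. x powr p)" using powr_convex[OF p] .
      from convex_onD[OF this, of u "\<bar>x\<bar>" "\<bar>y\<bar>"] u xne False
      show ?thesis by simp
    qed
  qed
  from s1 s2 show ?thesis by linarith
qed

lemma major:
  fixes p x1 x2 x3 x4 :: real
  assumes p: "1 \<le> p" and "x1 < x4" "x1 \<le> x2" "x2 \<le> x4" "x2 + x3 = x1 + x4"
  shows "\<bar>x2\<bar> powr p + \<bar>x3\<bar> powr p \<le> \<bar>x1\<bar> powr p + \<bar>x4\<bar> powr p"
proof -
  define u where "u = (x2 - x1) / (x4 - x1)"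
  have u: "0 \<le> u" "u \<le> 1" using assms unfolding u_def by (auto simp: divide_simps)
  have uu: "u*(x4-x1) = x2-x1" using assms unfolding u_def by simp
  have e2: "x2 = (1-u)*x1 + u*x4" using uu by (simp add: algebra_simps)
  have e3: "x3 = (1-(1-u))*x1 + (1-u)*x4" using uu assms(5) by (simp add: algebra_simps)
  have "\<bar>x2\<bar> powr p \<le> (1-u) * \<bar>x1\<bar> powr p + u * \<bar>x4\<bar> powr p"
    using habs_convex[OF p u, of x1 x4] e2 by simp
  moreover have "\<bar>x3\<bar> powr p \<le> (1-(1-u)) * \<bar>x1\<bar> powr p + (1-u) * \<bar>x4\<bar> powr p"
    using habs_convex[OF p, of "1-u" x1 x4] e3 u by simp
  ultimately show ?thesis by (simp add: algebra_simps)
qed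

lemma mono_diff:
  fixes p a a' s s' :: real
  assumes p: "1 \<le> p" and "a < a'" "s \<le> s'"
  shows "\<bar>s - a\<bar> powr p - \<bar>s - a'\<bar> powr p \<le> \<bar>s' - a\<bar> powr p - \<bar>s' - a'\<bar> powr p"
proof (cases "s = s'")
  case True then show ?thesis by simp
next
  case False
  have "\<bar>s - a\<bar> powr p + \<bar>s' - a'\<bar> powr p \<le> \<bar>s - a'\<bar> powr p + \<bar>s' - a\<bar> powr p"
    using assms False by (intro major) auto
  then show ?thesis by linarith
qed

definition PP :: "real \<Rightarrow> real \<Rightarrow> real \<times> real \<Rightarrow> real" where
  "PP p t q = \<bar>t - fst q\<bar> powr p + \<bar>snd q\<bar> powr p"

lemma dist_iff:
  assumes "1 \<le> p"
  shows "lp_dist p (t, 0) q' < lp_dist p (t, 0) q \<longleftrightarrow> PP p t q' < PP p t q"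
proof -
  have "lp_dist p (t, 0) q = PP p t q powr (1/p)" for q
    unfolding lp_dist_def PP_def by simp
  moreover have nn: "0 \<le> PP p t q" for q unfolding PP_def by simp
  moreover have "0 < 1/p" using assms by simp
  ultimately show ?thesis
    by (metis powr_less_mono2 powr_mono2 less_le not_le order.strict_iff_not)
qed

lemma D_mono:
  assumes "1 \<le> p" "fst q < fst q'" "s \<le> s'"
  shows "PP p s q - PP p s q' \<le> PP p s' q - PP p s' q'"
  using mono_diff[OF assms] unfolding PP_def by simp

lemma farthest_iff:
  assumes "1 \<le> p"
  shows "farthest p Q t q \<longleftrightarrow> q \<in> Q \<and> (\<forall>q' \<in> Q - {q}. PP p t q' < PP p t q)"
  unfolding farthest_def using dist_iff[OF assms] by simp

theorem lemma2:
  fixes p :: real and Q :: "(real \<times> real) set"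
  assumes "1 \<le> p"
    and "finite Q"
    and "\<forall>q \<in> Q. snd q \<ge> 0"
    and "inj_on fst Q"
  shows "(\<forall>q \<in> Q. {t. farthest p Q t q} = {} \<or> is_interval {t. farthest p Q t q})
       \<and> (\<forall>t t' q q'. t < t' \<longrightarrow> farthest p Q t q \<longrightarrow> farthest p Q t' q' \<longrightarrow> q \<noteq> q'
             \<longrightarrow> fst q > fst q')"
proof
  have ne: "fst q \<noteq> fst q'" if "q \<in> Q" "q' \<in> Q" "q \<noteq> q'" for q q'
    using assms(4) that by (meson inj_onD)
  show "\<forall>q \<in> Q. {t. farthest p Q t q} = {} \<or> is_interval {t. farthest p Q t q}"
  proof (intro ballI disjI2)
    fix q assume qQ: "q \<in> Q"
    show "is_interval {t. farthest p Q t q}"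
      unfolding is_interval_1
    proof (intro ballI allI impI)
      fix a b x assume a: "a \<in> {t. farthest p Q t q}" and b: "b \<in> {t. farthest p Q t q}"
        and x: "a \<le> x \<and> x \<le> b"
      have "PP p x q' < PP p x q" if q': "q' \<in> Q - {q}" for q'
      proof -
        have da: "PP p a q' < PP p a q" and db: "PP p b q' < PP p b q"
          using a b q' farthest_iff[OF assms(1)] by auto
        have "fst q \<noteq> fst q'" using ne[of q q'] qQ q' by blast
        then consider "fst q < fst q'" | "fst q' < fst q" by linarith
        then show ?thesis
        proof cases
          case 1
          from D_mono[OF assms(1) 1, of a x] x da show ?thesis by linarith
        next
          case 2
          from D_mono[OF assms(1) 2, of x b] x db show ?thesis by linarith
        qed
      qed
      then show "x \<in> {t. farthest p Q t q}"
        using qQ farthest_iff[OF assms(1)] by auto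
    qed
  qed
  show "\<forall>t t' q q'. t < t' \<longrightarrow> farthest p Q t q \<longrightarrow> farthest p Q t' q' \<longrightarrow> q \<noteq> q'
             \<longrightarrow> fst q > fst q'"
  proof (intro allI impI)
    fix t t' q q' assume tt: "t < t'" and f1: "farthest p Q t q" and f2: "farthest p Q t' q'"
      and nq: "q \<noteq> q'"
    have qQ: "q \<in> Q" "q' \<in> Q" using f1 f2 farthest_def by auto
    have d1: "PP p t q' < PP p t q" using f1 qQ nq farthest_iff[OF assms(1)] by auto
    have d2: "PP p t' q < PP p t' q'" using f2 qQ nq farthest_iff[OF assms(1)] by auto
    show "fst q > fst q'"
    proof (rule ccontr)
      assume "\<not> fst q > fst q'"
      then have "fst q < fst q'" using ne[OF qQ nq] by linarith
      from D_mono[OF assms(1) this, of t t'] tt d1 d2 show False by linarith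
    qed
  qed
qed

end
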